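(* Let $L$ be a uniquely complemented lattice that is not distributive. Then $L$ has infinite width, i.e. $L$ contains antichains of arbitrarily large finite size (there is no finite bound on the cardinality of antichains in $L$).
   Context: A uniquely complemented lattice is a bounded lattice (with least element $0$ and greatest element $1$) in which every element $x$ has exactly one complement, i.e. exactly one $y$ with $x \wedge y = 0$ and $x \vee y = 1$. The width of a lattice is the supremum of the cardinalities of its antichains (sets of pairwise incomparable elements); the lattice has finite width if this supremum is a finite number. *)

theory Defs
  imports Main
begin

definition uniquely_complemented :: "'a::bounded_lattice itself \<Rightarrow> bool" where
  "uniquely_complemented _ \<longleftrightarrow>
     (\<forall>x::'a. \<exists>!y::'a. inf x y = bot \<and> sup x y = top)"

definition distributive_lattice :: "'a::lattice itself \<Rightarrow> bool" where
  "distributive_lattice _ \<longleftrightarrow>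
     (\<forall>x y z::'a. inf x (sup y z) = sup (inf x y) (inf x z))"

definition antichain_in :: "'a::order set \<Rightarrow> bool" where
  "antichain_in A \<longleftrightarrow> (\<forall>x\<in>A. \<forall>y\<in>A. x \<noteq> y \<longrightarrow> \<not> x \<le> y \<and> \<not> y \<le> x)"

definition finite_width :: "'a::order itself \<Rightarrow> bool" where
  "finite_width _ \<longleftrightarrow> (\<exists>n::nat. \<forall>A::'a set. antichain_in A \<longrightarrow> finite A \<and> card A \<le> n)"

end

theory Submission
  imports Defs
begin

definition cmp :: "'a::bounded_lattice \<Rightarrow> 'a" where
  "cmp x = (THE y. inf x y = bot \<and> sup x y = top)"

definition is_atom :: "'a::bounded_lattice \<Rightarrow> bool" where
  "is_atom p \<longleftrightarrow> p \<noteq> bot \<and> (\<forall>z. z \<le> p \<longrightarrow> z = bot \<or> z = p)"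

context
  fixes T :: "'a::bounded_lattice itself"
  assumes UC: "uniquely_complemented T"
begin

lemma uc_ex: "\<exists>!y::'a. inf x y = bot \<and> sup x y = top"
  using UC unfolding uniquely_complemented_def by blast

lemma cmp1: "inf x (cmp x) = bot" and cmp2: "sup x (cmp x) = top" for x :: 'a
  using theI'[OF uc_ex[of x]] unfolding cmp_def by auto

lemma cmp_uniq: "inf x y = bot \<Longrightarrow> sup x y = top \<Longrightarrow> y = cmp (x::'a)"
  using uc_ex[of x] cmp1[of x] cmp2[of x] by blast

lemma cmp_cmp: "cmp (cmp x) = (x::'a)"
proof -
  have "inf (cmp x) x = bot" "sup (cmp x) x = top"
    using cmp1[of x] cmp2[of x] by (simp_all add: inf_commute sup_commute)
  then show ?thesis using cmp_uniq by metis
qed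

lemma cmp_inj: "cmp x = cmp y \<Longrightarrow> x = (y::'a)"
  by (metis cmp_cmp)

lemma cmp_top: "cmp (top::'a) = bot"
  using cmp_uniq[of top bot] by simp

lemma key: "(y::'a) < x \<Longrightarrow> inf x (cmp y) \<noteq> bot"
proof
  assume a: "y < x" "inf x (cmp y) = bot"
  have "sup x (cmp y) = top"
    by (metis a(1) cmp2 sup.absorb_iff2 sup_left_commute less_imp_le sup_top_left sup_commute)
  then have "cmp y = cmp x" using a cmp_uniq by blast
  then show False using a cmp_inj by blast
qed

lemma atom_lemma:
  assumes p: "is_atom (p::'a)" and np: "\<not> p \<le> a"
  shows "a \<le> cmp p"
proof -
  define c where "c = cmp (sup a p)"
  have c1: "inf c (sup a p) = bot" "sup c (sup a p) = top"
    unfolding c_def using cmp1 cmp2 by (simp_all add: inf_commute sup_commute)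
  have ca: "inf a c = bot"
    by (metis c1(1) inf.absorb_iff2 inf_bot_left inf_left_commute inf_sup_absorb inf_commute)
  have ne: "sup a c \<noteq> top"
  proof
    assume "sup a c = top"
    then have "c = cmp a" using ca cmp_uniq by blast
    then have "sup a p = a" using c_def cmp_inj by metis
    then show False using np by (metis sup.orderI)
  qed
  have "inf p (sup c a) = bot"
  proof (rule ccontr)
    assume "inf p (sup c a) \<noteq> bot"
    then have "inf p (sup c a) = p" using p inf.cobounded1[of p "sup c a"] unfolding is_atom_def by blast
    then have "p \<le> sup c a" by (metis inf.orderI)
    then have "sup c a = top" using c1(2)
      by (metis sup.absorb_iff2 sup_assoc sup_commute)
    then show False using ne by (simp add: sup_commute)
  qed
  moreover have "sup p (sup c a) = top" using c1(2)
    by (metis sup_assoc sup_commute)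
  ultimately have "sup c a = cmp p" using cmp_uniq by blast
  then show ?thesis by (metis sup_ge2)
qed

lemma atom_dich: "is_atom (p::'a) \<Longrightarrow> p \<le> a \<or> p \<le> cmp a"
proof (rule ccontr)
  assume p: "is_atom p" and n: "\<not> (p \<le> a \<or> p \<le> cmp a)"
  then have "a \<le> cmp p" "cmp a \<le> cmp p" using atom_lemma by auto
  then have "cmp p = top" using cmp2[of a]
    by (metis le_supI top.extremum_uniqueI)
  then have "p = bot" using cmp_top cmp_cmp by metis
  then show False using p unfolding is_atom_def by auto
qed

context
  assumes AT: "\<And>x::'a. x \<noteq> bot \<Longrightarrow> \<exists>p. is_atom p \<and> p \<le> x"
begin

lemma atom_le:
  assumes h: "\<And>p. is_atom p \<Longrightarrow> p \<le> a \<Longrightarrow> p \<le> (b::'a)"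
  shows "a \<le> b"
proof (rule ccontr)
  assume n: "\<not> a \<le> b"
  then have "inf a b < a" by (metis inf.absorb_iff1 inf.cobounded1 inf_commute order_less_le)
  then have "inf a (cmp (inf a b)) \<noteq> bot" by (rule key)
  then obtain q where q: "is_atom q" "q \<le> inf a (cmp (inf a b))" using AT by blast
  then have "q \<le> inf a b" using h by auto
  moreover have "q \<le> cmp (inf a b)" using q by auto
  ultimately have "q \<le> bot" using cmp1 by (metis le_inf_iff)
  then show False using q bot_unique unfolding is_atom_def by blast
qed

lemma anti: "a \<le> (b::'a) \<Longrightarrow> cmp b \<le> cmp a"
proof (rule atom_le)
  fix q assume ab: "a \<le> b" and q: "is_atom q" "q \<le> cmp b"
  have "\<not> q \<le> b"
  proof
    assume "q \<le> b"
    then have "q \<le> bot" using q cmp1 by (metis le_inf_iff)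
    then show False using q bot_unique unfolding is_atom_def by blast
  qed
  then have "\<not> q \<le> a" using ab by auto
  then show "q \<le> cmp a" using atom_dich q by blast
qed

lemma atom_sup: "is_atom (q::'a) \<Longrightarrow> q \<le> sup a b \<Longrightarrow> q \<le> a \<or> q \<le> b"
proof (rule ccontr)
  assume q: "is_atom q" "q \<le> sup a b" and n: "\<not> (q \<le> a \<or> q \<le> b)"
  define x where "x = inf (cmp a) (cmp b)"
  have qx: "q \<le> x" using atom_dich q n unfolding x_def by auto
  have "a \<le> cmp x" using anti[of x "cmp a"] cmp_cmp unfolding x_def by simp
  moreover have "b \<le> cmp x" using anti[of x "cmp b"] cmp_cmp unfolding x_def by simp
  ultimately have "q \<le> cmp x" using q by (meson le_sup_iff order_trans)
  then have "q \<le> bot" using qx cmp1 by (metis le_inf_iff)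
  then show False using q bot_unique unfolding is_atom_def by blast
qed

lemma distr: "distributive_lattice TYPE('a)"
  unfolding distributive_lattice_def
proof (intro allI antisym)
  fix x y z :: 'a
  show "inf x (sup y z) \<le> sup (inf x y) (inf x z)"
  proof (rule atom_le)
    fix p assume p: "is_atom p" "p \<le> inf x (sup y z)"
    then have "p \<le> y \<or> p \<le> z" using atom_sup by auto
    then show "p \<le> sup (inf x y) (inf x z)" using p
      by (meson le_inf_iff le_supI1 le_supI2)
  qed
  show "sup (inf x y) (inf x z) \<le> inf x (sup y z)"
    by (simp add: inf.coboundedI1 inf.coboundedI2 le_infI2)
qed

end

lemma chain_antichain:
  fixes f :: "nat \<Rightarrow> 'a"
  assumes dec: "\<And>i. i < k \<Longrightarrow> f (Suc i) < f i"
  shows "\<exists>A::'a set. antichain_in A \<and> finite A \<and> card A = k"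
proof -
  have mono: "f j \<le> f i" if "i \<le> j" "j \<le> k" for i j
    using that
  proof (induction j)
    case 0 then show ?case by simp
  next
    case (Suc j)
    then show ?case
    proof (cases "i = Suc j")
      case False
      then have "f j \<le> f i" using Suc by auto
      moreover have "f (Suc j) < f j" using dec Suc by auto
      ultimately show ?thesis by auto
    qed simp
  qed
  define d where "d i = inf (f i) (cmp (f (Suc i)))" for i
  have dnz: "d i \<noteq> bot" if "i < k" for i
    unfolding d_def using key dec that by blast
  have dle1: "d i \<le> cmp (f (Suc i))" for i unfolding d_def by simp
  have dle2: "d j \<le> f (Suc i)" if "i < j" "j < k" for i j
    unfolding d_def using mono[of "Suc i" j] that by (meson inf.coboundedI1 Suc_leI less_imp_le)
  have inc: "\<not> d i \<le> d j \<and> \<not> d j \<le> d i" if "i < j" "j < k" for i j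
  proof -
    have b: "x \<le> f (Suc i) \<Longrightarrow> x \<le> cmp (f (Suc i)) \<Longrightarrow> x = bot" for x
      using cmp1 by (metis le_inf_iff bot_unique)
    show ?thesis
    proof (intro conjI notI)
      assume "d i \<le> d j"
      then have "d i = bot" using b dle1 dle2 that by (meson order_trans)
      then show False using dnz that by auto
    next
      assume "d j \<le> d i"
      then have "d j = bot" using b dle1 dle2 that by (meson order_trans)
      then show False using dnz that by auto
    qed
  qed
  have inj: "inj_on d {..<k}"
  proof (rule inj_onI)
    fix i j assume "i \<in> {..<k}" "j \<in> {..<k}" "d i = d j"
    then show "i = j" using inc by (metis lessThan_iff linorder_neqE_nat order_refl)
  qed
  have "antichain_in (d ` {..<k})"
    unfolding antichain_in_def using inc
    by (metis imageE lessThan_iff linorder_neqE_nat)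
  moreover have "card (d ` {..<k}) = k" using inj card_image by fastforce
  ultimately show ?thesis by blast
qed

end

theorem proposition7p3:
  assumes "uniquely_complemented TYPE('a::bounded_lattice)"
    and "\<not> distributive_lattice TYPE('a)"
  shows "\<not> finite_width TYPE('a) \<and>
         (\<forall>n::nat. \<exists>A::'a set. antichain_in A \<and> finite A \<and> card A = n)"
proof -
  note UC = assms(1)
  have all: "\<exists>A::'a set. antichain_in A \<and> finite A \<and> card A = n" for n
  proof (rule ccontr)
    assume nA: "\<not> (\<exists>A::'a set. antichain_in A \<and> finite A \<and> card A = n)"
    have AT: "\<exists>p. is_atom p \<and> p \<le> x" if x: "x \<noteq> (bot::'a)" for x
    proof (rule ccontr)
      assume na: "\<not> (\<exists>p. is_atom p \<and> p \<le> x)"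
      have step: "\<exists>z. z < y \<and> z \<noteq> bot" if "y \<le> x" "y \<noteq> bot" for y
      proof -
        have "\<not> is_atom y" using na that by auto
        then show ?thesis using that unfolding is_atom_def by (auto simp: order_less_le)
      qed
      have "\<exists>f::nat \<Rightarrow> 'a. (\<forall>i\<le>k. f i \<noteq> bot \<and> f i \<le> x) \<and> (\<forall>i<k. f (Suc i) < f i)" for k
      proof (induction k)
        case 0
        show ?case using x by (intro exI[of _ "\<lambda>_. x"]) auto
      next
        case (Suc k)
        then obtain f where f: "\<forall>i\<le>k. f i \<noteq> bot \<and> f i \<le> x" "\<forall>i<k. f (Suc i) < f i" by blast
        then obtain z where z: "z < f k" "z \<noteq> bot" using step by blast
        have "z \<le> x" using z f by (meson order.strict_implies_order order_trans order_refl)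
        then show ?case using f z
          by (intro exI[of _ "f(Suc k := z)"]) (auto simp: le_Suc_eq less_Suc_eq)
      qed
      then obtain f :: "nat \<Rightarrow> 'a" where "\<forall>i<n. f (Suc i) < f i" by blast
      then show False using chain_antichain[OF UC, of n f] nA by blast
    qed
    show False using distr[OF UC AT] assms(2) by blast
  qed
  have "\<not> finite_width TYPE('a)"
  proof
    assume "finite_width TYPE('a)"
    then obtain m where "\<forall>A::'a set. antichain_in A \<longrightarrow> finite A \<and> card A \<le> m"
      unfolding finite_width_def by blast
    then show False using all[of "Suc m"] by fastforce
  qed
  then show ?thesis using all by blast
qed

end
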